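(* Let $a,b$ be nonzero complex numbers with $a\ne b$ and $a+b\neq0$, and let $n$ be a positive integer. Define $$f(a,b)=\lim_{x\to \frac{2ab}{a+b}}\frac{d^n}{dx^n}\,\frac{(x-a)^n(x-b)^n}{x^{n+1}}.$$ Then $f(a,b)=0$ if $n$ is odd, and if $n$ is even $$f(a,b)=(-1)^{n/2}(a-b)^n\left(\frac{a+b}{2ab}\right)^{n+1}\prod_{i=1}^{n/2}(2i-1)^2.$$ *)

theory Defs
  imports "HOL-Analysis.Analysis"
begin

end

theory Submission imports Defs "HOL-Computational_Algebra.Polynomial" begin


lemma higher_deriv_seq:
  fixes F :: "complex \<Rightarrow> complex" and R :: "nat \<Rightarrow> complex \<Rightarrow> complex"
  assumes S: "open S" and F: "\<And>x. x \<in> S \<Longrightarrow> F x = R 0 x"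
    and D: "\<And>j x. x \<in> S \<Longrightarrow> (R j has_field_derivative R (Suc j) x) (at x)"
  shows "x \<in> S \<Longrightarrow> (deriv ^^ j) F x = R j x"
proof (induction j arbitrary: x)
  case 0 then show ?case using F by simp
next
  case (Suc j)
  have "((deriv ^^ j) F has_field_derivative R (Suc j) x) (at x)"
    by (rule has_field_derivative_transform_within_open[OF D[OF Suc.prems] S Suc.prems])
       (simp add: Suc.IH)
  then show ?case by (simp add: DERIV_imp_deriv)
qed

lemma laurent_deriv:
  fixes c :: "nat \<Rightarrow> complex" and e :: "nat \<Rightarrow> int"
  assumes "x \<noteq> 0"
  shows "((\<lambda>x. \<Sum>k\<in>K. c k * (\<Prod>i<j. of_int (e k - int i)) * power_int x (e k - int j))
     has_field_derivative (\<Sum>k\<in>K. c k * (\<Prod>i<Suc j. of_int (e k - int i)) * power_int x (e k - int (Suc j)))) (at x)"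
proof (rule DERIV_sum)
  fix k assume "k \<in> K"
  have "((\<lambda>x. power_int x (e k - int j)) has_field_derivative of_int (e k - int j) * power_int x (e k - int j - 1)) (at x)"
    using DERIV_power_int[OF DERIV_ident, where n="e k - int j" and x=x and s=UNIV] assms by simp
  from DERIV_cmult[OF this, of "c k * (\<Prod>i<j. of_int (e k - int i))"]
  show "((\<lambda>x. c k * (\<Prod>i<j. of_int (e k - int i)) * power_int x (e k - int j)) has_field_derivative
     c k * (\<Prod>i<Suc j. of_int (e k - int i)) * power_int x (e k - int (Suc j))) (at x)"
    by (simp add: algebra_simps)
qed

lemma polyn_deriv:
  fixes c :: "nat \<Rightarrow> complex" and mm :: "nat \<Rightarrow> nat"
  shows "((\<lambda>y. \<Sum>kk\<in>K. c kk * (\<Prod>i<j. of_nat (mm kk) - of_nat i) * (y - z) ^ (mm kk - j))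
     has_field_derivative (\<Sum>kk\<in>K. c kk * (\<Prod>i<Suc j. of_nat (mm kk) - of_nat i) * (y - z) ^ (mm kk - Suc j))) (at y)"
proof (rule DERIV_sum)
  fix kk assume "kk \<in> K"
  define k where "k = mm kk"
  note k_def[symmetric, simp]
  have "((\<lambda>y. (y - z) ^ (k - j)) has_field_derivative of_nat (k - j) * (y - z) ^ (k - j - 1)) (at y)"
    using DERIV_power[OF DERIV_diff[OF DERIV_ident DERIV_const[where k=z]], where n="k - j" and x=y and s=UNIV] by simp
  from DERIV_cmult[OF this, of "c kk * (\<Prod>i<j. of_nat k - of_nat i)"]
  have d: "((\<lambda>y. c kk * (\<Prod>i<j. of_nat k - of_nat i) * (y - z) ^ (k - j)) has_field_derivative
     c kk * (\<Prod>i<j. of_nat k - of_nat i) * (of_nat (k - j) * (y - z) ^ (k - j - 1))) (at y)"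
    by (simp add: algebra_simps)
  have eq: "c kk * (\<Prod>i<j. of_nat k - of_nat i) * (of_nat (k - j) * (y - z) ^ (k - j - 1)) =
     c kk * (\<Prod>i<Suc j. (of_nat k - of_nat i :: complex)) * (y - z) ^ (k - Suc j)"
  proof (cases "j \<le> k")
    case True then show ?thesis by (simp add: of_nat_diff algebra_simps)
  next
    case False
    then have "(\<Prod>i<j. (of_nat k - of_nat i :: complex)) = 0"
      by (intro prod_zero) auto
    moreover have "(\<Prod>i<Suc j. (of_nat k - of_nat i :: complex)) = 0"
      using False by (intro prod_zero) auto
    ultimately show ?thesis by simp
  qed
  show "((\<lambda>y. c kk * (\<Prod>i<j. of_nat (mm kk) - of_nat i) * (y - z) ^ (mm kk - j)) has_field_derivative
     c kk * (\<Prod>i<Suc j. of_nat (mm kk) - of_nat i) * (y - z) ^ (mm kk - Suc j)) (at y)"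
    using d unfolding eq by (simp only: k_def)
qed

lemma fact_double: "fact (2*m) = (2::nat)^m * fact m * (\<Prod>i\<in>{1..m}. 2*i - 1)"
proof (induction m)
  case 0 then show ?case by simp
next
  case (Suc m)
  have "fact (2 * Suc m) = (2*m+2) * (2*m+1) * (fact (2*m) :: nat)"
    by (simp add: fact_Suc algebra_simps)
  also have "\<dots> = (2::nat)^Suc m * fact (Suc m) * (\<Prod>i\<in>{1..Suc m}. 2*i - 1)"
    using Suc by (simp add: prod.atLeast1_atMost_eq prod.cl_ivl_Suc algebra_simps fact_Suc)
  finally show ?case .
qed


theorem lemma9:
  fixes a b :: complex and n :: nat
  assumes "a \<noteq> 0" and "b \<noteq> 0" and "a \<noteq> b" and "a + b \<noteq> 0" and "n > 0"
  shows "(((deriv ^^ n) (\<lambda>x. (x - a) ^ n * (x - b) ^ n / x ^ (n + 1))) \<longlongrightarrow>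
            (if odd n then 0
             else (-1) ^ (n div 2) * (a - b) ^ n * ((a + b) / (2 * a * b)) ^ (n + 1) *
                  (\<Prod>i\<in>{1..n div 2}. (2 * of_nat i - 1) ^ 2)))
           (at (2 * a * b / (a + b)))"
proof -
  note ab = assms
  define g where "g = (\<lambda>x::complex. (x - a) ^ n * (x - b) ^ n / x ^ (n + 1))"
  define c0 where "c0 = 2 * a * b / (a + b)"
  define y0 where "y0 = (a + b) / (2 * a * b)"
  define dd where "dd = (b - a) / (2 * a * b)"
  define p where "p = a * b"
  define f where "f = ([:1, -a:] * [:1, -b:]) ^ n"
  define D where "D = degree f"
  define cf where "cf = coeff f"
  define e where "e = (\<lambda>k::nat. int n - 1 - int k)"
  define R where "R = (\<lambda>j x. \<Sum>k\<le>D. cf k * (\<Prod>i<j. of_int (e k - int i)) * power_int x (e k - int j))"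
  have c0nz: "c0 \<noteq> 0" and y0c0: "y0 = 1 / c0" using ab by (auto simp: c0_def y0_def)
  have polyf: "poly f y = ((1 - a * y) * (1 - b * y)) ^ n" for y
    by (simp add: f_def algebra_simps)
  have polyf2: "poly f y = (\<Sum>k\<le>D. cf k * y ^ k)" for y
    by (simp add: poly_altdef D_def cf_def)
  have gR: "g x = R 0 x" if "x \<in> - {0}" for x
  proof -
    have x0: "x \<noteq> 0" using that by simp
    have n1: "int n - 1 = int (n - 1)" using ab by simp
    have t: "cf k * power_int x (e k) = x ^ (n - 1) * (cf k * (1 / x) ^ k)" for k
      using x0 by (simp add: e_def power_int_diff n1 power_one_over field_simps)
    have "R 0 x = (\<Sum>k\<le>D. cf k * power_int x (e k))" by (simp add: R_def)
    also have "\<dots> = x ^ (n - 1) * poly f (1 / x)"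
      by (simp add: t polyf2 sum_distrib_left)
    also have "\<dots> = x ^ (n - 1) * (((x - a) * (x - b)) / x ^ 2) ^ n"
      unfolding polyf using x0 by (simp add: field_simps power2_eq_square)
    also have "\<dots> = x ^ (n - 1) * ((x - a) ^ n * (x - b) ^ n) / (x ^ (n - 1) * x ^ (n + 1))"
    proof -
      have pw: "x ^ (n - 1) * x ^ (n + 1) = (x ^ 2) ^ n"
      proof -
        have "(n - 1) + (n + 1) = 2 * n" using ab by simp
        then show ?thesis by (metis power_add power_mult)
      qed
      show ?thesis unfolding pw by (simp add: power_divide power_mult_distrib)
    qed
    also have "\<dots> = g x" using x0 by (simp add: g_def)
    finally show ?thesis by simp
  qed
  have Rd: "(R j has_field_derivative R (Suc j) x) (at x)" if "x \<in> - {0}" for j x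
    unfolding R_def using laurent_deriv[where x=x and c=cf and e=e and K="{..D}" and j=j] that by simp
  have gRn: "(deriv ^^ n) g x = R n x" if "x \<in> - {0}" for x
    using higher_deriv_seq[of "- {0}" g R x n] gR Rd that by auto
  have lim: "((deriv ^^ n) g \<longlongrightarrow> R n c0) (at c0)"
  proof (rule Lim_transform_eventually)
    show "(R n \<longlongrightarrow> R n c0) (at c0)"
      using DERIV_isCont[OF Rd[of c0 n]] c0nz by (simp add: isCont_def)
    show "\<forall>\<^sub>F x in at c0. R n x = (deriv ^^ n) g x"
    proof -
      have "\<forall>\<^sub>F x in at c0. x \<in> - {0}"
        using eventually_at_in_open'[of "- {0}" c0] c0nz by auto
      then show ?thesis by (rule eventually_mono) (simp add: gRn)
    qed
  qed
  define P where "P = (\<lambda>k::nat. (\<Prod>i<n. (of_nat k - of_nat i :: complex)))"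
  have s4a: "(\<Prod>i<n. of_int (e k - int i) :: complex) = (-1) ^ n * P k" for k
  proof -
    have "(\<Prod>i<n. of_int (e k - int i) :: complex) = (\<Prod>i<n. of_int (e k - int (n - Suc i)))"
      by (rule prod.nat_diff_reindex[symmetric])
    also have "\<dots> = (\<Prod>i<n. (-1) * (of_nat k - of_nat i))"
      by (rule prod.cong) (auto simp: e_def of_nat_diff)
    also have "\<dots> = (\<Prod>i<n. (-1::complex)) * P k" by (simp only: prod.distrib P_def)
    also have "\<dots> = (-1) ^ n * P k" by simp
    finally show ?thesis .
  qed
  have s4b: "R n c0 = (-1) ^ n * y0 ^ (n + 1) * (\<Sum>k\<le>D. cf k * P k * (y0 - 0) ^ (k - n))"
    unfolding R_def sum_distrib_left
  proof (rule sum.cong[OF refl])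
    fix k assume "k \<in> {..D}"
    show "cf k * (\<Prod>i<n. of_int (e k - int i)) * power_int c0 (e k - int n) =
       (-1) ^ n * y0 ^ (n + 1) * (cf k * P k * (y0 - 0) ^ (k - n))"
    proof (cases "k < n")
      case True
      then have "P k = 0" unfolding P_def by (intro prod_zero) auto
      then show ?thesis by (simp only: s4a) simp
    next
      case False
      have "e k - int n = - int (k + 1)" by (simp add: e_def)
      then have "power_int c0 (e k - int n) = y0 ^ (k + 1)"
        by (simp only: power_int_minus power_int_of_nat) (simp add: y0c0 power_one_over inverse_eq_divide)
      also have "\<dots> = y0 ^ (n + 1) * y0 ^ (k - n)"
        using False by (simp flip: power_add)
      finally show ?thesis by (simp only: s4a) simp
    qed
  qed
  have s4c: "(deriv ^^ n) (poly f) y0 = (\<Sum>k\<le>D. cf k * P k * (y0 - 0) ^ (k - n))"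
  proof -
    define R' where "R' = (\<lambda>j y. \<Sum>k\<le>D. cf k * (\<Prod>i<j. of_nat ((\<lambda>k. k) k) - of_nat i) * (y - 0) ^ ((\<lambda>k. k) k - j))"
    have "(deriv ^^ n) (poly f) y0 = R' n y0"
    proof (rule higher_deriv_seq[of UNIV])
      show "poly f x = R' 0 x" for x by (simp add: R'_def polyf2)
      show "(R' j has_field_derivative R' (Suc j) x) (at x)" for j x
        unfolding R'_def by (rule polyn_deriv)
    qed auto
    then show ?thesis by (simp add: R'_def P_def)
  qed
  define C where "C = (\<lambda>j. p ^ n * of_nat (n choose j) * (- (dd ^ 2)) ^ (n - j))"
  have quad: "(1 - a * y) * (1 - b * y) = p * ((y - y0) ^ 2 + (- (dd ^ 2)))" for y
    using ab by (simp add: p_def y0_def dd_def field_simps power2_eq_square)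
  have s4d: "(deriv ^^ n) (poly f) y0 = (\<Sum>j\<le>n. C j * (\<Prod>i<n. of_nat (2 * j) - of_nat i) * (y0 - y0) ^ (2 * j - n))"
  proof -
    define R' where "R' = (\<lambda>jj y. \<Sum>j\<le>n. C j * (\<Prod>i<jj. of_nat ((\<lambda>j. 2 * j) j) - of_nat i) * (y - y0) ^ ((\<lambda>j. 2 * j) j - jj))"
    have "(deriv ^^ n) (poly f) y0 = R' n y0"
    proof (rule higher_deriv_seq[of UNIV])
      show "poly f x = R' 0 x" for x
        unfolding polyf quad power_mult_distrib binomial_ring
        by (simp add: R'_def C_def sum_distrib_left algebra_simps flip: power_mult)
      show "(R' j has_field_derivative R' (Suc j) x) (at x)" for j x
        unfolding R'_def by (rule polyn_deriv)
    qed auto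
    then show ?thesis by (simp add: R'_def)
  qed
  have s4e: "(\<Sum>j\<le>n. C j * (\<Prod>i<n. of_nat (2 * j) - of_nat i) * (y0 - y0) ^ (2 * j - n))
      = (if even n then C (n div 2) * fact n else 0)"
  proof -
    have "C j * (\<Prod>i<n. of_nat (2 * j) - of_nat i) * (y0 - y0) ^ (2 * j - n) =
       (if j = n div 2 then (if even n then C (n div 2) * fact n else 0) else 0)" for j
    proof (cases "2 * j = n")
      case True
      have "(\<Prod>i<n. of_nat n - of_nat i :: complex) = fact n"
        by (simp add: fact_prod_rev of_nat_prod of_nat_diff atLeast0LessThan)
      then show ?thesis using True by auto
    next
      case False
      show ?thesis
      proof (cases "2 * j < n")
        case True
        then have "(\<Prod>i<n. of_nat (2 * j) - of_nat i :: complex) = 0"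
          by (intro prod_zero bexI[of _ "2 * j"]) auto
        then show ?thesis using False by auto
      next
        case False2: False
        then show ?thesis using False by auto
      qed
    qed
    then have "(\<Sum>j\<le>n. C j * (\<Prod>i<n. of_nat (2 * j) - of_nat i) * (y0 - y0) ^ (2 * j - n))
       = (\<Sum>j\<le>n. (if j = n div 2 then (if even n then C (n div 2) * fact n else 0) else 0))"
      by simp
    also have "\<dots> = (if even n then C (n div 2) * fact n else 0)"
      by (simp add: sum.delta')
    finally show ?thesis .
  qed
  have val: "R n c0 = (if odd n then 0
             else (-1) ^ (n div 2) * (a - b) ^ n * ((a + b) / (2 * a * b)) ^ (n + 1) *
                  (\<Prod>i\<in>{1..n div 2}. (2 * of_nat i - 1) ^ 2))"
  proof -
    have R1: "R n c0 = (-1) ^ n * y0 ^ (n + 1) * (if even n then C (n div 2) * fact n else 0)"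
      using s4b s4c s4d s4e by simp
    show ?thesis
    proof (cases "even n")
      case False then show ?thesis using R1 by simp
    next
      case True
      then obtain m where nm: "n = 2 * m" by blast
      have nd: "n div 2 = m" using nm by simp
      define Qn where "Qn = (\<Prod>i\<in>{1..m}. 2 * i - 1 :: nat)"
      have natf: "(n choose m) * fact n = 2 ^ m * 2 ^ m * Qn ^ 2"
      proof -
        have b: "fact m * fact m * (n choose m) = (fact n :: nat)"
          using binomial_fact_lemma[of m n] nm by simp
        have fd: "fact n = (2::nat) ^ m * fact m * Qn" using fact_double[of m] nm Qn_def by simp
        have "fact m * fact m * ((n choose m) * fact n) = fact m * fact m * (2 ^ m * 2 ^ m * Qn ^ 2 :: nat)"
        proof -
          have "fact m * fact m * ((n choose m) * fact n) = (fact n :: nat) * fact n"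
            using b by (simp add: algebra_simps)
          also have "\<dots> = fact m * fact m * (2 ^ m * 2 ^ m * Qn ^ 2)"
            unfolding fd by (simp add: power2_eq_square algebra_simps)
          finally show ?thesis .
        qed
        then show ?thesis by simp
      qed
      have Qc: "of_nat Qn = (\<Prod>i\<in>{1..m}. (2 * of_nat i - 1 :: complex))"
        unfolding Qn_def of_nat_prod by (rule prod.cong) (auto simp: of_nat_diff)
      have cf: "of_nat (n choose m) * fact n = (2 ^ m * 2 ^ m * (\<Prod>i\<in>{1..m}. (2 * of_nat i - 1 :: complex)) ^ 2)"
        using arg_cong[OF natf, of "of_nat :: nat \<Rightarrow> complex"] unfolding Qc[symmetric] by simp
      have pd: "p * dd = (b - a) / 2" using ab by (simp add: p_def dd_def field_simps)
      have e1: "(- (dd ^ 2)) ^ m = (-1) ^ m * dd ^ n"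
        by (subst power_minus) (simp only: nm power_mult)
      have e2: "(p * dd) ^ n = (a - b) ^ n / (2 ^ m * 2 ^ m)"
      proof -
        have "(p * dd) ^ n = (b - a) ^ n / 2 ^ n" unfolding pd by (simp add: power_divide)
        also have "(b - a) ^ n = (a - b) ^ n"
          using nm by (metis minus_diff_eq power_minus_even even_mult_iff even_numeral)
        also have "(2::complex) ^ n = 2 ^ m * 2 ^ m" using nm by (simp flip: power_add mult_2)
        finally show ?thesis .
      qed
      have "R n c0 = (-1) ^ n * y0 ^ (n + 1) * (p ^ n * of_nat (n choose m) * (- (dd ^ 2)) ^ m * fact n)"
        using R1 True nm by (simp add: C_def nd)
      also have "\<dots> = y0 ^ (n + 1) * ((-1) ^ m * (p * dd) ^ n * (of_nat (n choose m) * fact n))"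
        unfolding e1 power_mult_distrib using nm by (simp add: ac_simps)
      also have "\<dots> = y0 ^ (n + 1) * ((-1) ^ m * (a - b) ^ n * (\<Prod>i\<in>{1..m}. (2 * of_nat i - 1 :: complex)) ^ 2)"
        unfolding cf e2 by simp
      finally show ?thesis using True by (simp add: nd y0_def prod_power_distrib ac_simps)
    qed
  qed
  show ?thesis using lim val unfolding g_def c0_def by simp
qed

end
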